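(* In the setting and for the adaptive regularized Newton method described in the context, suppose conditions (A.2)–(A.3) hold and that $z_k$ satisfies the Armijo condition. Then $\|z_k-x_k\|\le\frac{2\kappa_g}{\sigma_k-\kappa_H}$ whenever $\sigma_k>\kappa_H$.
   Context: Setting: $\mathcal E$ is a finite-dimensional real Euclidean space with inner product $\langle\cdot,\cdot\rangle$, norm $\|\cdot\|$; $\mathcal M\subset\mathcal E$ is a smooth embedded Riemannian submanifold of dimension $n$ with tangent spaces $\mathcal T_x\mathcal M$, tangent bundle $\mathcal T\mathcal M$, Riemannian metric $\langle\cdot,\cdot\rangle_x$ and norm $\|\cdot\|_x$. $f$ is a smooth real function on an open set of $\mathcal E$ containing $\mathrm{conv}(\mathcal M)$, with Euclidean gradient/Hessian $\nabla f,\nabla^2 f$ and Riemannian gradient/Hessian $\mathrm{grad}\, f,\mathrm{Hess}\, f$ of $f|_{\mathcal M}$. $R:\mathcal T\mathcal M\to\mathcal M$ is a smooth retraction ($R_x(0_x)=x$, $DR_x(0_x)=\mathrm{id}$). Adaptive regularized Newton method: fix $x_0\in\mathcal M$, $\sigma_0>0$, $0<\eta_1\le\eta_2<1$, $0<\gamma_0<1<\gamma_1\le\gamma_2$, $\rho,\delta\in(0,1)$, $\alpha_0\in(0,1]$, $T>0$, $\theta>1$, $\epsilon\ge0$, and symmetric linear operators $H_k$ on $\mathcal E$. At iteration $k$ let $m_k(x)=\langle\nabla f(x_k),x-x_k\rangle+\frac12\langle H_k(x-x_k),x-x_k\rangle+\frac{\sigma_k}2\|x-x_k\|^2$, $g:=\mathrm{grad}\,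 m_k(x_k)$ ($=\mathrm{grad}\, f(x_k)$) and $\mathcal H:=\mathrm{Hess}\, m_k(x_k)$ (Riemannian gradient and Hessian of $m_k|_{\mathcal M}$ at $x_k$). Modified CG (inner products/norms in $\langle\cdot,\cdot\rangle_{x_k}$): $\eta_0=0$, $r_0=g$, $p_0=-r_0$, $i=0$; while $i\le n-1$: $\pi_i=\langle p_i,\mathcal Hp_i\rangle$; if $\pi_i/\|p_i\|^2\le\epsilon$ then (if $i=0$: $s_k=p_0$, $d_k=0$; else $s_k=\eta_i$ and $d_k=p_i$ if $\pi_i/\|p_i\|^2\le-\epsilon$, $d_k=0$ otherwise) and stop; else $\alpha_i=\|r_i\|^2/\pi_i$, $\eta_{i+1}=\eta_i+\alpha_ip_i$, $r_{i+1}=r_i+\alpha_i\mathcal Hp_i$; if $\|r_{i+1}\|\le\min\{\|r_0\|^\theta,T\}$ then $s_k=\eta_{i+1}$, $d_k=0$ and stop; else $\beta_{i+1}=\|r_{i+1}\|^2/\|r_i\|^2$, $p_{i+1}=-r_{i+1}+\beta_{i+1}p_i$, $i\leftarrow i+1$. Then $\xi_k=s_k+\tau_kd_k$ with $\tau_k=\langle d_k,g\rangle/\langle d_k,\mathcal Hd_k\rangle$ if $d_k\ne0$, $\xi_k=s_k$ if $d_k=0$. Trial point: $\alpha_k=\alpha_0\delta^h$, $h$ the smallest nonnegative integer with $m_k(R_{x_k}(\alpha_0\delta^h\xi_k))\le\rho\alpha_0\delta^h\langle g,\xi_k\rangle_{x_k}$ (Armijo condition); $z_k=R_{x_k}(\alpha_k\xi_k)$;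 $\rho_k=(f(z_k)-f(x_k))/m_k(z_k)$; $x_{k+1}=z_k$ if $\rho_k\ge\eta_1$, else $x_{k+1}=x_k$; $\sigma_{k+1}\in(0,\gamma_0\sigma_k]$ if $\rho_k\ge\eta_2$, $\in[\gamma_0\sigma_k,\gamma_1\sigma_k]$ if $\eta_1\le\rho_k<\eta_2$, $\in[\gamma_1\sigma_k,\gamma_2\sigma_k]$ otherwise; the method stops if $\mathrm{grad}\, f(x_k)=0$. Conditions: (A.2) there is $\kappa_g>0$ with $\|\nabla f(x_k)\|\le\kappa_g$ for all $k$; (A.3) there is $\kappa_H>0$ with $\|H_k\|\le\kappa_H$ for all $k$. *)

theory Defs
  imports "HOL-Analysis.Analysis"
begin

definition tangent_space :: "'a::euclidean_space set \<Rightarrow> 'a \<Rightarrow> 'a set" where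
  "tangent_space M y = {v. \<exists>\<gamma> e. e > 0 \<and> \<gamma> 0 = y \<and> (\<forall>t\<in>{-e<..<e}. \<gamma> t \<in> M)
                          \<and> (\<gamma> has_vector_derivative v) (at 0)}"

text \<open>For a Riemannian submanifold (induced metric) the Riemannian gradient is the
  projection of the Euclidean gradient onto the tangent space.\<close>
definition tproj :: "'a::euclidean_space set \<Rightarrow> 'a \<Rightarrow> 'a" where
  "tproj V v = (THE u. u \<in> V \<and> (\<forall>w\<in>V. (v - u) \<bullet> w = 0))"

definition model :: "'a::euclidean_space \<Rightarrow> ('a \<Rightarrow> 'a) \<Rightarrow> real \<Rightarrow> 'a \<Rightarrow> 'a \<Rightarrow> real" where
  "model gE Hk sig xk y =
     gE \<bullet> (y - xk) + 1/2 * (Hk (y - xk) \<bullet> (y - xk)) + sig / 2 * (norm (y - xk))^2"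

text \<open>The iterates p_i, r_i, eta_i are given as sequences; the algorithm is deterministic,
  so this relational description determines (s, d).\<close>
definition mcg :: "'a::euclidean_space \<Rightarrow> ('a \<Rightarrow> 'a) \<Rightarrow> real \<Rightarrow> real \<Rightarrow> real \<Rightarrow> nat
                    \<Rightarrow> 'a \<Rightarrow> 'a \<Rightarrow> bool" where
  "mcg g Hs eps theta Tc n s d \<longleftrightarrow>
    (\<exists>m p r eta.
       m < n \<and> eta 0 = 0 \<and> r 0 = g \<and> p 0 = - g \<and>
       (\<forall>i<m.
          (p i \<bullet> Hs (p i)) / (norm (p i))^2 > eps \<and>
          eta (Suc i) = eta i + ((norm (r i))^2 / (p i \<bullet> Hs (p i))) *\<^sub>R p i \<and>
          r (Suc i) = r i + ((norm (r i))^2 / (p i \<bullet> Hs (p i))) *\<^sub>R Hs (p i) \<and>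
          \<not> (norm (r (Suc i)) \<le> min (norm (r 0) powr theta) Tc) \<and>
          p (Suc i) = - r (Suc i) + ((norm (r (Suc i)))^2 / (norm (r i))^2) *\<^sub>R p i) \<and>
       ( ((p m \<bullet> Hs (p m)) / (norm (p m))^2 \<le> eps \<and>
           (if m = 0 then s = p 0 \<and> d = 0
            else s = eta m \<and>
                 d = (if (p m \<bullet> Hs (p m)) / (norm (p m))^2 \<le> - eps then p m else 0)))
       \<or> ((p m \<bullet> Hs (p m)) / (norm (p m))^2 > eps \<and>
           norm (r m + ((norm (r m))^2 / (p m \<bullet> Hs (p m))) *\<^sub>R Hs (p m))
              \<le> min (norm (r 0) powr theta) Tc \<and>
           s = eta m + ((norm (r m))^2 / (p m \<bullet> Hs (p m))) *\<^sub>R p m \<and>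
           d = 0)))"

definition search_dir :: "'a::euclidean_space \<Rightarrow> ('a \<Rightarrow> 'a) \<Rightarrow> 'a \<Rightarrow> 'a \<Rightarrow> 'a" where
  "search_dir g Hs s d =
     (if d \<noteq> 0 then s + ((d \<bullet> g) / (d \<bullet> Hs d)) *\<^sub>R d else s)"

end

theory Submission
  imports Defs
begin


lemma cg_inv:
  fixes Hs :: "'a::euclidean_space \<Rightarrow> 'a" and p r :: "nat \<Rightarrow> 'a"
  assumes V: "subspace V" and HV: "\<forall>u\<in>V. Hs u \<in> V"
    and Hsym: "\<forall>u\<in>V. \<forall>v\<in>V. Hs u \<bullet> v = u \<bullet> Hs v"
    and r0: "r 0 \<in> V" and p0: "p 0 = - r 0"
    and step: "\<forall>i<m. p i \<bullet> Hs (p i) > 0 \<and> r i \<noteq> 0 \<and>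
        r (Suc i) = r i + ((norm (r i))^2 / (p i \<bullet> Hs (p i))) *\<^sub>R Hs (p i) \<and>
        p (Suc i) = - r (Suc i) + ((norm (r (Suc i)))^2 / (norm (r i))^2) *\<^sub>R p i"
  shows "i \<le> m \<Longrightarrow> (\<forall>j\<le>i. r j \<in> V \<and> p j \<in> V) \<and> (\<forall>j<i. r i \<bullet> p j = 0)
     \<and> (\<forall>j<i. p i \<bullet> Hs (p j) = 0) \<and> r i \<bullet> p i = - ((norm (r i))^2)
     \<and> r 0 \<bullet> p i = - ((norm (r i))^2)"
proof (induction i)
  case 0 show ?case using r0 p0 V by (simp add: subspace_neg power2_norm_eq_inner)
next
  case (Suc i)
  hence im: "i < m" by simp
  from Suc.IH im have IV: "\<forall>j\<le>i. r j \<in> V \<and> p j \<in> V" and IC: "\<forall>j<i. r i \<bullet> p j = 0"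
    and IB: "\<forall>j<i. p i \<bullet> Hs (p j) = 0" and IE: "r i \<bullet> p i = - ((norm (r i))^2)"
    and ID: "r 0 \<bullet> p i = - ((norm (r i))^2)" by auto
  define piv where "piv = p i \<bullet> Hs (p i)"
  define a where "a = (norm (r i))^2 / piv"
  define b where "b = (norm (r (Suc i)))^2 / (norm (r i))^2"
  from step im have pos: "piv > 0" and rne: "r i \<noteq> 0"
    and rS: "r (Suc i) = r i + a *\<^sub>R Hs (p i)"
    and pS: "p (Suc i) = - r (Suc i) + b *\<^sub>R p i"
    unfolding piv_def a_def b_def by auto
  have apos: "a > 0" using pos rne by (simp add: a_def)
  have piV: "p i \<in> V" "r i \<in> V" using IV by auto
  have rSV: "r (Suc i) \<in> V" using rS piV HV V by (simp add: subspace_add subspace_scale)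
  have pSV: "p (Suc i) \<in> V" using pS rSV piV V by (simp add: subspace_diff subspace_scale)
  have NV: "\<forall>j\<le>Suc i. r j \<in> V \<and> p j \<in> V" using IV rSV pSV by (auto simp: le_Suc_eq)
  have C: "\<forall>j<Suc i. r (Suc i) \<bullet> p j = 0"
  proof (intro allI impI)
    fix j assume j: "j < Suc i"
    show "r (Suc i) \<bullet> p j = 0"
    proof (cases "j = i")
      case True
      have "r (Suc i) \<bullet> p i = r i \<bullet> p i + a * (Hs (p i) \<bullet> p i)"
        by (simp add: rS inner_add_left)
      also have "Hs (p i) \<bullet> p i = piv" by (simp add: piv_def inner_commute)
      finally show ?thesis using True IE pos by (simp add: a_def)
    next
      case False
      hence ji: "j < i" using j by simp
      have "r (Suc i) \<bullet> p j = r i \<bullet> p j + a * (Hs (p i) \<bullet> p j)"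
        by (simp add: rS inner_add_left)
      also have "Hs (p i) \<bullet> p j = p i \<bullet> Hs (p j)" using Hsym IV ji by auto
      finally show ?thesis using IC IB ji by simp
    qed
  qed
  have RR: "\<forall>l\<le>i. r (Suc i) \<bullet> r l = 0"
  proof (intro allI impI)
    fix l assume l: "l \<le> i"
    show "r (Suc i) \<bullet> r l = 0"
    proof (cases l)
      case 0
      have "r (Suc i) \<bullet> p 0 = 0" using C by simp
      thus ?thesis using 0 p0 by simp
    next
      case (Suc l')
      have "l' < m" using l Suc im by simp
      hence "p l = - r l + ((norm (r l))^2 / (norm (r l'))^2) *\<^sub>R p l'" using step Suc by auto
      hence "r l = ((norm (r l))^2 / (norm (r l'))^2) *\<^sub>R p l' - p l" by (simp add: algebra_simps)
      moreover have "r (Suc i) \<bullet> p l' = 0" "r (Suc i) \<bullet> p l = 0" using C l Suc by auto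
      ultimately show ?thesis by (metis (no_types, lifting) inner_diff_right inner_scaleR_right mult_zero_right diff_zero)
    qed
  qed
  have B: "\<forall>j<Suc i. p (Suc i) \<bullet> Hs (p j) = 0"
  proof (intro allI impI)
    fix j assume j: "j < Suc i"
    have "p (Suc i) \<bullet> Hs (p j) = - (r (Suc i) \<bullet> Hs (p j)) + b * (p i \<bullet> Hs (p j))"
      by (simp add: pS inner_diff_left)
    moreover have "a * (r (Suc i) \<bullet> Hs (p i)) = r (Suc i) \<bullet> (r (Suc i) - r i)"
      by (simp add: rS inner_add_right inner_diff_right)
    moreover have "r (Suc i) \<bullet> (r (Suc i) - r i) = (norm (r (Suc i)))^2"
      using RR by (simp add: inner_diff_right power2_norm_eq_inner)
    moreover have "j < i \<Longrightarrow> r (Suc i) \<bullet> Hs (p j) = 0"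
    proof -
      assume ji: "j < i"
      define aj where "aj = (norm (r j))^2 / (p j \<bullet> Hs (p j))"
      have jm: "j < m" using ji im by simp
      from step jm have "p j \<bullet> Hs (p j) > 0" "r j \<noteq> 0"
        "r (Suc j) = r j + aj *\<^sub>R Hs (p j)" by (auto simp: aj_def)
      hence ajp: "aj > 0" and rSj: "r (Suc j) = r j + aj *\<^sub>R Hs (p j)" by (auto simp: aj_def)
      have "aj * (r (Suc i) \<bullet> Hs (p j)) = r (Suc i) \<bullet> r (Suc j) - r (Suc i) \<bullet> r j"
        by (simp add: rSj inner_add_right)
      also have "\<dots> = 0" using RR ji by simp
      finally show ?thesis using ajp by simp
    qed
    ultimately show "p (Suc i) \<bullet> Hs (p j) = 0"
    proof (cases "j = i")
      case True
      assume h1: "p (Suc i) \<bullet> Hs (p j) = - (r (Suc i) \<bullet> Hs (p j)) + b * (p i \<bullet> Hs (p j))"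
        and h2: "a * (r (Suc i) \<bullet> Hs (p i)) = r (Suc i) \<bullet> (r (Suc i) - r i)"
        and h3: "r (Suc i) \<bullet> (r (Suc i) - r i) = (norm (r (Suc i)))^2"
      have "r (Suc i) \<bullet> Hs (p i) = (norm (r (Suc i)))^2 / a" using h2 h3 apos
        by (simp add: field_simps)
      thus ?thesis using h1 True pos rne by (simp add: a_def b_def piv_def field_simps)
    next
      case False
      assume h1: "p (Suc i) \<bullet> Hs (p j) = - (r (Suc i) \<bullet> Hs (p j)) + b * (p i \<bullet> Hs (p j))"
        and h4: "j < i \<Longrightarrow> r (Suc i) \<bullet> Hs (p j) = 0"
      hence "j < i" using j False by simp
      thus ?thesis using h1 h4 IB by simp
    qed
  qed
  have E: "r (Suc i) \<bullet> p (Suc i) = - ((norm (r (Suc i)))^2)"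
    using C by (simp add: pS inner_diff_right power2_norm_eq_inner)
  have D: "r 0 \<bullet> p (Suc i) = - ((norm (r (Suc i)))^2)"
  proof -
    have "r 0 \<bullet> r (Suc i) = 0" using RR by (simp add: inner_commute)
    hence "r 0 \<bullet> p (Suc i) = b * (r 0 \<bullet> p i)" by (simp add: pS inner_diff_right)
    thus ?thesis using ID rne by (simp add: b_def)
  qed
  show ?case using NV C B E D by blast
qed



lemma tproj_in:
  fixes V :: "'a::euclidean_space set"
  assumes V: "subspace V" shows "tproj V v \<in> V"
proof -
  obtain y z where y: "y \<in> span V" and z: "\<And>w. w \<in> span V \<Longrightarrow> orthogonal z w" and e: "v = y + z"
    by (rule orthogonal_subspace_decomp_exists[of V v]) blast
  have sV: "span V = V" using V by simp
  have yV: "y \<in> V" using y sV by simp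
  have ex: "y \<in> V \<and> (\<forall>w\<in>V. (v - y) \<bullet> w = 0)" using yV z e sV
    by (auto simp: orthogonal_def)
  have un: "u = y" if "u \<in> V \<and> (\<forall>w\<in>V. (v - u) \<bullet> w = 0)" for u
  proof -
    have "u - y \<in> V" using that yV V by (simp add: subspace_diff)
    hence "(v - y) \<bullet> (u - y) - (v - u) \<bullet> (u - y) = 0" using that ex by auto
    hence "(u - y) \<bullet> (u - y) = 0" by (simp add: algebra_simps inner_diff_left inner_diff_right inner_commute)
    thus ?thesis by simp
  qed
  have "tproj V v = y" unfolding tproj_def using ex un by (rule the_equality) 
  thus ?thesis using yV by simp
qed

lemma model_bound:
  fixes gE :: "'a::euclidean_space"
  assumes lin: "linear Hk" and on: "onorm Hk \<le> kH" and g: "norm gE \<le> kg"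
    and sig: "sig > kH" and m: "model gE Hk sig xk z \<le> 0"
  shows "norm (z - xk) \<le> 2 * kg / (sig - kH)"
proof -
  define y where "y = z - xk"
  define N where "N = norm y"
  have bl: "bounded_linear Hk" using lin by (simp add: linear_conv_bounded_linear)
  have N0: "N \<ge> 0" by (simp add: N_def)
  have kg0: "kg \<ge> 0" using g norm_ge_zero order_trans by blast
  have c1: "gE \<bullet> y \<ge> - (kg * N)"
  proof -
    have "\<bar>gE \<bullet> y\<bar> \<le> norm gE * N" by (simp add: N_def Cauchy_Schwarz_ineq2)
    also have "\<dots> \<le> kg * N" using g N0 by (simp add: mult_right_mono)
    finally show ?thesis by linarith
  qed
  have c2: "Hk y \<bullet> y \<ge> - (kH * N^2)"
  proof -
    have "\<bar>Hk y \<bullet> y\<bar> \<le> norm (Hk y) * N" by (simp add: N_def Cauchy_Schwarz_ineq2)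
    also have "\<dots> \<le> (onorm Hk * N) * N" using onorm[OF bl, of y] N0
      by (simp add: N_def mult_right_mono)
    also have "\<dots> \<le> (kH * N) * N" using on N0 by (simp add: mult_right_mono)
    finally show ?thesis by (simp add: power2_eq_square)
  qed
  have "model gE Hk sig xk z = gE \<bullet> y + 1/2 * (Hk y \<bullet> y) + sig/2 * N^2"
    by (simp add: model_def y_def N_def)
  hence "- (kg * N) + (sig - kH)/2 * N^2 \<le> 0" using m c1 c2 by (simp add: algebra_simps)
  hence h: "N * ((sig - kH)/2 * N - kg) \<le> 0" by (simp add: algebra_simps power2_eq_square)
  show ?thesis
  proof (cases "N = 0")
    case True thus ?thesis using kg0 sig by (simp add: y_def N_def)
  next
    case False
    hence "N > 0" using N0 by simp
    hence "(sig - kH)/2 * N - kg \<le> 0" using h by (simp add: mult_le_0_iff)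
    hence "N \<le> 2 * kg / (sig - kH)" using sig by (simp add: field_simps)
    thus ?thesis by (simp add: y_def N_def)
  qed
qed



theorem lemma4p7:
  fixes M :: "'a::euclidean_space set" and n :: nat
    and f :: "'a \<Rightarrow> real" and gradf :: "'a \<Rightarrow> 'a" and U :: "'a set"
    and R :: "'a \<Rightarrow> 'a \<Rightarrow> 'a"
    and x :: "nat \<Rightarrow> 'a" and H :: "nat \<Rightarrow> 'a \<Rightarrow> 'a" and \<sigma> :: "nat \<Rightarrow> real"
    and k :: nat and Hess :: "'a \<Rightarrow> 'a" and s d :: 'a and h :: nat
    and \<rho> \<delta> \<alpha>0 Tc \<theta> \<epsilon> \<kappa>g \<kappa>H :: real
  assumes manifold: "\<forall>y\<in>M. subspace (tangent_space M y) \<and> dim (tangent_space M y) = n"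
    and U_open: "open U" and U_conv: "convex hull M \<subseteq> U"
    and f_grad: "\<forall>y\<in>U. (f has_derivative (\<lambda>v. gradf y \<bullet> v)) (at y)"
    and R_in: "\<forall>y\<in>M. \<forall>v\<in>tangent_space M y. R y v \<in> M"
    and R_zero: "\<forall>y\<in>M. R y 0 = y"
    and R_deriv: "\<forall>y\<in>M. (R y has_derivative id) (at 0 within tangent_space M y)"
    and x_in: "\<forall>j. x j \<in> M"
    and \<sigma>_pos: "\<forall>j. \<sigma> j > 0"
    and H_sym: "\<forall>j. linear (H j) \<and> (\<forall>u v. H j u \<bullet> v = u \<bullet> H j v)"
    and params: "0 < \<rho>" "\<rho> < 1" "0 < \<delta>" "\<delta> < 1" "0 < \<alpha>0" "\<alpha>0 \<le> 1"
                "Tc > 0" "\<theta> > 1" "\<epsilon> \<ge> 0"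
    and Hess_maps: "\<forall>u\<in>tangent_space M (x k). Hess u \<in> tangent_space M (x k)"
    and Hess_lin: "\<forall>u\<in>tangent_space M (x k). \<forall>v\<in>tangent_space M (x k). \<forall>a b.
                     Hess (a *\<^sub>R u + b *\<^sub>R v) = a *\<^sub>R Hess u + b *\<^sub>R Hess v"
    and Hess_sym: "\<forall>u\<in>tangent_space M (x k). \<forall>v\<in>tangent_space M (x k).
                     Hess u \<bullet> v = u \<bullet> Hess v"
    and CG: "mcg (tproj (tangent_space M (x k)) (gradf (x k))) Hess \<epsilon> \<theta> Tc n s d"
    and A2: "\<forall>j. norm (gradf (x j)) \<le> \<kappa>g"
    and A3: "\<forall>j. onorm (H j) \<le> \<kappa>H"
    and Armijo:
      "model (gradf (x k)) (H k) (\<sigma> k) (x k)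
          (R (x k) ((\<alpha>0 * \<delta> ^ h) *\<^sub>R
             search_dir (tproj (tangent_space M (x k)) (gradf (x k))) Hess s d))
        \<le> \<rho> * (\<alpha>0 * \<delta> ^ h) *
           (tproj (tangent_space M (x k)) (gradf (x k)) \<bullet>
              search_dir (tproj (tangent_space M (x k)) (gradf (x k))) Hess s d)"
  shows "\<sigma> k > \<kappa>H \<Longrightarrow>
    norm (R (x k) ((\<alpha>0 * \<delta> ^ h) *\<^sub>R
             search_dir (tproj (tangent_space M (x k)) (gradf (x k))) Hess s d) - x k)
      \<le> 2 * \<kappa>g / (\<sigma> k - \<kappa>H)"

proof -
  assume sk: "\<sigma> k > \<kappa>H"
  define V where "V = tangent_space M (x k)"
  define g where "g = tproj V (gradf (x k))"
  have V: "subspace V" using manifold x_in by (simp add: V_def)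
  have gV: "g \<in> V" using tproj_in[OF V] by (simp add: g_def)
  have HV: "\<forall>u\<in>V. Hess u \<in> V" using Hess_maps by (simp add: V_def)
  have Hs: "\<forall>u\<in>V. \<forall>v\<in>V. Hess u \<bullet> v = u \<bullet> Hess v" using Hess_sym by (simp add: V_def)
  have CG': "mcg g Hess \<epsilon> \<theta> Tc n s d" using CG by (simp add: g_def V_def)
  then obtain m p r eta where mn: "m < n" and e0: "eta 0 = 0" and r0: "r 0 = g" and p0: "p 0 = - g"
    and loop: "\<forall>i<m.
          (p i \<bullet> Hess (p i)) / (norm (p i))^2 > \<epsilon> \<and>
          eta (Suc i) = eta i + ((norm (r i))^2 / (p i \<bullet> Hess (p i))) *\<^sub>R p i \<and>
          r (Suc i) = r i + ((norm (r i))^2 / (p i \<bullet> Hess (p i))) *\<^sub>R Hess (p i) \<and>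
          \<not> (norm (r (Suc i)) \<le> min (norm (r 0) powr \<theta>) Tc) \<and>
          p (Suc i) = - r (Suc i) + ((norm (r (Suc i)))^2 / (norm (r i))^2) *\<^sub>R p i"
    and fin: "( ((p m \<bullet> Hess (p m)) / (norm (p m))^2 \<le> \<epsilon> \<and>
           (if m = 0 then s = p 0 \<and> d = 0
            else s = eta m \<and>
                 d = (if (p m \<bullet> Hess (p m)) / (norm (p m))^2 \<le> - \<epsilon> then p m else 0)))
       \<or> ((p m \<bullet> Hess (p m)) / (norm (p m))^2 > \<epsilon> \<and>
           norm (r m + ((norm (r m))^2 / (p m \<bullet> Hess (p m))) *\<^sub>R Hess (p m))
              \<le> min (norm (r 0) powr \<theta>) Tc \<and>
           s = eta m + ((norm (r m))^2 / (p m \<bullet> Hess (p m))) *\<^sub>R p m \<and>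
           d = 0))"
    unfolding mcg_def by blast
  have ratpos: "a > 0" if "a / (norm (v::'a))^2 > \<epsilon>" for a v
  proof -
    have "a / (norm v)^2 > 0" using that params(9) by linarith
    thus ?thesis by (simp add: zero_less_divide_iff)
  qed
  have step: "\<forall>i<m. p i \<bullet> Hess (p i) > 0 \<and> r i \<noteq> 0 \<and>
        r (Suc i) = r i + ((norm (r i))^2 / (p i \<bullet> Hess (p i))) *\<^sub>R Hess (p i) \<and>
        p (Suc i) = - r (Suc i) + ((norm (r (Suc i)))^2 / (norm (r i))^2) *\<^sub>R p i"
  proof (intro allI impI)
    fix i assume im: "i < m"
    have pp: "p i \<bullet> Hess (p i) > 0" using loop im ratpos by blast
    have rn: "r i \<noteq> 0"
    proof (cases i)
      case 0
      have "p 0 \<bullet> Hess (p 0) > 0" using pp 0 by simp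
      hence "p 0 \<noteq> 0" by auto
      thus ?thesis using 0 r0 p0 by auto
    next
      case (Suc j)
      have "j < m" using Suc im by simp
      hence nc: "\<not> (norm (r (Suc j)) \<le> min (norm (r 0) powr \<theta>) Tc)" using loop by blast
      show ?thesis
      proof
        assume "r i = 0"
        hence "norm (r (Suc j)) = 0" using Suc by simp
        moreover have "0 \<le> min (norm (r 0) powr \<theta>) Tc" using params(7) by simp
        ultimately show False using nc by simp
      qed
    qed
    show "p i \<bullet> Hess (p i) > 0 \<and> r i \<noteq> 0 \<and>
        r (Suc i) = r i + ((norm (r i))^2 / (p i \<bullet> Hess (p i))) *\<^sub>R Hess (p i) \<and>
        p (Suc i) = - r (Suc i) + ((norm (r (Suc i)))^2 / (norm (r i))^2) *\<^sub>R p i"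
      using pp rn loop im by blast
  qed
  have r0V: "r 0 \<in> V" using r0 gV by simp
  have p0': "p 0 = - r 0" using p0 r0 by simp
  have gp: "g \<bullet> p i \<le> 0" if "i \<le> m" for i
  proof -
    have "r 0 \<bullet> p i = - ((norm (r i))^2)"
      using cg_inv[OF V HV Hs r0V p0' step that] by blast
    thus ?thesis using r0 by simp
  qed
  have ge: "g \<bullet> eta i \<le> 0" if "i \<le> m" for i
    using that
  proof (induction i)
    case 0 thus ?case using e0 by simp
  next
    case (Suc i)
    hence im: "i < m" by simp
    have pp: "p i \<bullet> Hess (p i) > 0" using step im by blast
    have eq: "eta (Suc i) = eta i + ((norm (r i))^2 / (p i \<bullet> Hess (p i))) *\<^sub>R p i"
      using loop im by blast
    have "g \<bullet> eta (Suc i) = g \<bullet> eta i + ((norm (r i))^2 / (p i \<bullet> Hess (p i))) * (g \<bullet> p i)"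
      by (simp add: eq inner_add_right)
    moreover have "((norm (r i))^2 / (p i \<bullet> Hess (p i))) * (g \<bullet> p i) \<le> 0"
      using pp gp[of i] im by (intro mult_nonneg_nonpos divide_nonneg_pos) auto
    ultimately show ?case using Suc by simp
  qed
  have gs: "g \<bullet> s \<le> 0"
  proof (cases "(p m \<bullet> Hess (p m)) / (norm (p m))^2 \<le> \<epsilon>")
    case True
    with fin have f1: "if m = 0 then s = p 0 \<and> d = 0 else s = eta m \<and>
                 d = (if (p m \<bullet> Hess (p m)) / (norm (p m))^2 \<le> - \<epsilon> then p m else 0)"
      by auto
    show ?thesis
    proof (cases "m = 0")
      case True thus ?thesis using f1 p0 by simp
    next
      case False thus ?thesis using f1 ge[of m] by simp
    qed
  next
    case False
    with fin have sm: "s = eta m + ((norm (r m))^2 / (p m \<bullet> Hess (p m))) *\<^sub>R p m" by auto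
    have pp: "p m \<bullet> Hess (p m) > 0" using False ratpos[of "p m \<bullet> Hess (p m)" "p m"] by simp
    have "g \<bullet> s = g \<bullet> eta m + ((norm (r m))^2 / (p m \<bullet> Hess (p m))) * (g \<bullet> p m)"
      by (simp add: sm inner_add_right)
    moreover have "((norm (r m))^2 / (p m \<bullet> Hess (p m))) * (g \<bullet> p m) \<le> 0"
      using pp gp[of m] by (intro mult_nonneg_nonpos divide_nonneg_pos) auto
    ultimately show ?thesis using ge[of m] by simp
  qed
  have dH: "d \<bullet> Hess d \<le> 0" if dn: "d \<noteq> 0"
  proof -
    have c: "(p m \<bullet> Hess (p m)) / (norm (p m))^2 \<le> - \<epsilon> \<and> d = p m"
      using fin dn by (auto split: if_splits)
    hence "p m \<noteq> 0" using dn by simp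
    hence np: "(norm (p m))^2 > 0" by simp
    have "(p m \<bullet> Hess (p m)) / (norm (p m))^2 \<le> 0" using c params(9) by linarith
    hence "p m \<bullet> Hess (p m) \<le> 0" using np by (simp add: divide_le_0_iff)
    thus ?thesis using c by simp
  qed
  have gxi: "g \<bullet> search_dir g Hess s d \<le> 0"
  proof (cases "d = 0")
    case True thus ?thesis using gs by (simp add: search_dir_def)
  next
    case False
    have "g \<bullet> search_dir g Hess s d = g \<bullet> s + (d \<bullet> g) * (d \<bullet> g) / (d \<bullet> Hess d)"
      using False by (simp add: search_dir_def inner_add_right inner_commute)
    moreover have "(d \<bullet> g) * (d \<bullet> g) / (d \<bullet> Hess d) \<le> 0"
      using dH[OF False] by (simp add: divide_nonneg_nonpos)
    ultimately show ?thesis using gs by simp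
  qed
  have apos: "\<rho> * (\<alpha>0 * \<delta> ^ h) \<ge> 0" using params by simp
  have "model (gradf (x k)) (H k) (\<sigma> k) (x k)
          (R (x k) ((\<alpha>0 * \<delta> ^ h) *\<^sub>R search_dir g Hess s d)) \<le> 0"
    using Armijo mult_nonneg_nonpos[OF apos gxi] unfolding g_def V_def by linarith
  from model_bound[OF _ _ _ sk this] H_sym A2 A3
  show "norm (R (x k) ((\<alpha>0 * \<delta> ^ h) *\<^sub>R
             search_dir (tproj (tangent_space M (x k)) (gradf (x k))) Hess s d) - x k)
      \<le> 2 * \<kappa>g / (\<sigma> k - \<kappa>H)" unfolding g_def V_def by blast
qed

end
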